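(* Call a real sequence $A$ over $\mathbb{Z}^2$ a counterexample if $|A|=3.99$, every multiplicity is $\le\frac12$, every line in $\mathbb{R}^2$ contains at most $\frac32$ points of $A$, and $\Sigma^1_{\mathbb{R}}(A)$ contains no lattice point of $\mathbb{Z}^2$ in its interior. If a counterexample exists, then there exists a counterexample $A$ with the following property: whenever $v_1,v_2,v_3,v$ are distinct lattice points with $\mu(v_1),\mu(v_2),\mu(v_3)>0$ and $v$ lies in the interior or on the boundary of the triangle with vertices $v_1,v_2,v_3$, then either $\mu(v)=\frac12$, or $v$ lies on a line $\ell$ containing exactly $\frac32$ points of $A$; moreover, if $v$ lies on the boundary of the triangle, such a line $\ell$ is not the line supporting the side of the triangle containing $v$.
   Context: A real sequence $A$ over $\mathbb{Z}^2$ is a family of pairs $(a_i,\mu_i)$ of distinct points $a_i\in\mathbb{Z}^2$ and non-negative reals $\mu_i$ (multiplicities; $\mu(v)$ is the multiplicity of $v$, $0$ if $v$ does not occur); $|A|=\sum_i\mu_i$. A set $X$ contains $\sum_{i:a_i\in X}\mu_i$ points of $A$. $\Sigma^1_{\mathbb{R}}(A)=\{\sum_i t_ia_i : t_i\in[0,\mu_i],\ \sum_i t_i=1\}$. *)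

theory Defs
  imports "HOL-Analysis.Analysis"
begin

text \<open>A real sequence over Z^2 is represented by its multiplicity function
  mu :: int*int => real (nonnegative, finitely supported). Points of R^2 are
  elements of real*real.\<close>

type_synonym rseq = "int \<times> int \<Rightarrow> real"

definition emb :: "int \<times> int \<Rightarrow> real \<times> real" where
  "emb v = (real_of_int (fst v), real_of_int (snd v))"

definition supp :: "rseq \<Rightarrow> (int \<times> int) set" where
  "supp mu = {v. mu v \<noteq> 0}"

definition real_seq :: "rseq \<Rightarrow> bool" where
  "real_seq mu \<longleftrightarrow> (\<forall>v. 0 \<le> mu v) \<and> finite (supp mu)"

definition total :: "rseq \<Rightarrow> real" where
  "total mu = (\<Sum>v\<in>supp mu. mu v)"

definition pts_in :: "rseq \<Rightarrow> (real \<times> real) set \<Rightarrow> real" where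
  "pts_in mu X = (\<Sum>v\<in>{v\<in>supp mu. emb v \<in> X}. mu v)"

definition is_line :: "(real \<times> real) set \<Rightarrow> bool" where
  "is_line L \<longleftrightarrow> (\<exists>p d. d \<noteq> 0 \<and> L = {p + t *\<^sub>R d | t. True})"

definition Sigma1R :: "rseq \<Rightarrow> (real \<times> real) set" where
  "Sigma1R mu = {(\<Sum>v\<in>supp mu. t v *\<^sub>R emb v) | t.
      (\<forall>v\<in>supp mu. 0 \<le> t v \<and> t v \<le> mu v) \<and> (\<Sum>v\<in>supp mu. t v) = 1}"

definition counterexample :: "rseq \<Rightarrow> bool" where
  "counterexample mu \<longleftrightarrow> real_seq mu \<and> total mu = 3.99 \<and>
     (\<forall>v. mu v \<le> 1/2) \<and>
     (\<forall>L. is_line L \<longrightarrow> pts_in mu L \<le> 3/2) \<and>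
     (\<forall>w. emb w \<notin> interior (Sigma1R mu))"

end

theory Submission
  imports Defs
begin

lemma box_compact_gen:
  assumes "\<And>u. compact (K u)"
  shows "compact {mu::rseq. \<forall>u. mu u \<in> K u}"
proof -
  have "compactin (product_topology (\<lambda>i. euclidean) UNIV) (PiE UNIV K)"
    using assms by (subst compactin_PiE) auto
  moreover have "PiE UNIV K = {mu::rseq. \<forall>u. mu u \<in> K u}"
    by (simp add: PiE_UNIV_domain Pi_def)
  ultimately show ?thesis by (simp add: euclidean_product_topology)
qed

lemma cont_coord: "continuous_on A (\<lambda>mu::rseq. mu u)"
  by (rule continuous_on_subset[OF continuous_on_product_coordinates]) auto

lemma cont_sum: "continuous_on A (\<lambda>mu::rseq. \<Sum>u\<in>F. mu u * c u)"
  by (intro continuous_intros cont_coord)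

lemma cont_sum1: "continuous_on A (\<lambda>mu::rseq. \<Sum>u\<in>F. mu u)"
  by (intro continuous_intros cont_coord)

lemma cont_sumR: "continuous_on A (\<lambda>mu::rseq. \<Sum>u\<in>F. mu u *\<^sub>R (c u :: real \<times> real))"
  by (intro continuous_intros cont_coord)

lemma supp_zero: "v \<notin> supp mu \<Longrightarrow> mu v = 0"
  by (simp add: supp_def)

lemma total_F:
  assumes "finite F" "supp mu \<subseteq> F"
  shows "total mu = (\<Sum>v\<in>F. mu v)"
  unfolding total_def using assms
  by (intro sum.mono_neutral_left) (auto simp: supp_def)

lemma pts_F:
  assumes "finite F" "supp mu \<subseteq> F"
  shows "pts_in mu L = (\<Sum>v\<in>{v\<in>F. emb v \<in> L}. mu v)"
  unfolding pts_in_def using assms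
  by (intro sum.mono_neutral_left) (auto simp: supp_def)

lemma sigma_F:
  assumes "finite F" "supp mu \<subseteq> F"
  shows "Sigma1R mu = {(\<Sum>v\<in>F. t v *\<^sub>R emb v) | t.
      (\<forall>v\<in>F. 0 \<le> t v \<and> t v \<le> mu v) \<and> (\<Sum>v\<in>F. t v) = 1}"
proof (intro equalityI subsetI)
  fix p assume "p \<in> Sigma1R mu"
  then obtain t where t: "p = (\<Sum>v\<in>supp mu. t v *\<^sub>R emb v)" "\<forall>v\<in>supp mu. 0 \<le> t v \<and> t v \<le> mu v"
    "(\<Sum>v\<in>supp mu. t v) = 1" unfolding Sigma1R_def by auto
  define t' where "t' = (\<lambda>v. if v \<in> supp mu then t v else 0)"
  have fin: "finite F" by fact
  have i: "F \<inter> supp mu = supp mu" using assms(2) by auto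
  have "(\<Sum>v\<in>F. t' v *\<^sub>R emb v) = (\<Sum>v\<in>F. if v \<in> supp mu then t v *\<^sub>R emb v else 0)"
    by (rule sum.cong) (auto simp: t'_def)
  also have "\<dots> = (\<Sum>v\<in>F \<inter> supp mu. t v *\<^sub>R emb v)" by (rule sum.inter_restrict[OF fin, symmetric])
  also have "\<dots> = p" by (simp add: i t(1))
  finally have 1: "(\<Sum>v\<in>F. t' v *\<^sub>R emb v) = p" .
  have "(\<Sum>v\<in>F. t' v) = 1" unfolding t'_def by (simp add: sum.inter_restrict[OF fin, symmetric] i t(3))
  moreover have "\<forall>v\<in>F. 0 \<le> t' v \<and> t' v \<le> mu v"
    using t(2) by (auto simp: t'_def supp_def)
  ultimately show "p \<in> {(\<Sum>v\<in>F. t v *\<^sub>R emb v) | t.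
      (\<forall>v\<in>F. 0 \<le> t v \<and> t v \<le> mu v) \<and> (\<Sum>v\<in>F. t v) = 1}" using 1 by blast
next
  fix p assume "p \<in> {(\<Sum>v\<in>F. t v *\<^sub>R emb v) | t.
      (\<forall>v\<in>F. 0 \<le> t v \<and> t v \<le> mu v) \<and> (\<Sum>v\<in>F. t v) = 1}"
  then obtain t where t: "p = (\<Sum>v\<in>F. t v *\<^sub>R emb v)" "\<forall>v\<in>F. 0 \<le> t v \<and> t v \<le> mu v"
    "(\<Sum>v\<in>F. t v) = 1" by auto
  have z: "\<forall>v\<in>F - supp mu. t v = 0" using t(2) by (force simp: supp_def)
  have "p = (\<Sum>v\<in>supp mu. t v *\<^sub>R emb v)" unfolding t(1)
    using assms z by (intro sum.mono_neutral_left[symmetric]) auto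
  moreover have "(\<Sum>v\<in>supp mu. t v) = 1" unfolding t(3)[symmetric]
    using assms z by (intro sum.mono_neutral_left) auto
  moreover have "\<forall>v\<in>supp mu. 0 \<le> t v \<and> t v \<le> mu v" using t(2) assms by auto
  ultimately show "p \<in> Sigma1R mu" unfolding Sigma1R_def by blast
qed

lemma sigma_closed:
  assumes "real_seq mu"
  shows "closed (Sigma1R mu)"
proof -
  let ?F = "supp mu"
  have fin: "finite ?F" using assms by (simp add: real_seq_def)
  let ?T = "{t::rseq. \<forall>u. t u \<in> (if u \<in> ?F then {0..mu u} else {0})} \<inter> {t. (\<Sum>v\<in>?F. t v) = 1}"
  have "compact ?T"
    by (intro compact_Int_closed box_compact_gen closed_Collect_eq cont_sum1) auto
  then have "compact ((\<lambda>t. \<Sum>v\<in>?F. t v *\<^sub>R emb v) ` ?T)"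
    by (intro compact_continuous_image cont_sumR)
  moreover have "(\<lambda>t. \<Sum>v\<in>?F. t v *\<^sub>R emb v) ` ?T = Sigma1R mu"
  proof (intro equalityI subsetI)
    fix p assume "p \<in> (\<lambda>t. \<Sum>v\<in>?F. t v *\<^sub>R emb v) ` ?T"
    then obtain t where tt: "t \<in> ?T" "p = (\<Sum>v\<in>?F. t v *\<^sub>R emb v)" by auto
    show "p \<in> Sigma1R mu" unfolding Sigma1R_def
      by (rule CollectI, rule exI[of _ t]) (use tt in \<open>auto split: if_splits\<close>)
  next
    fix p assume "p \<in> Sigma1R mu"
    then obtain t where t: "p = (\<Sum>v\<in>?F. t v *\<^sub>R emb v)" "\<forall>v\<in>?F. 0 \<le> t v \<and> t v \<le> mu v"
      "(\<Sum>v\<in>?F. t v) = 1" unfolding Sigma1R_def by auto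
    define t' where "t' = (\<lambda>v. if v \<in> ?F then t v else 0)"
    have "t' \<in> ?T" using t by (auto simp: t'_def)
    moreover have "p = (\<Sum>v\<in>?F. t' v *\<^sub>R emb v)" unfolding t(1) by (intro sum.cong) (auto simp: t'_def)
    ultimately show "p \<in> (\<lambda>t. \<Sum>v\<in>?F. t v *\<^sub>R emb v) ` ?T" by blast
  qed
  ultimately show ?thesis by (metis compact_imp_closed)
qed

lemma finite_lattice_hull:
  assumes "finite X"
  shows "finite {w. emb w \<in> convex hull X}"
proof -
  have "bounded (convex hull X)" using assms by (rule finite_imp_bounded_convex_hull)
  then obtain B where B: "\<forall>x\<in>convex hull X. norm x \<le> B" by (auto simp: bounded_iff)
  let ?N = "\<lceil>B\<rceil>"
  have "{w. emb w \<in> convex hull X} \<subseteq> {-?N..?N} \<times> {-?N..?N}"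
  proof
    fix w assume "w \<in> {w. emb w \<in> convex hull X}"
    then have nb: "norm (emb w) \<le> B" using B by auto
    obtain a b where w: "w = (a,b)" by (cases w)
    have "\<bar>real_of_int a\<bar> \<le> B" using nb norm_fst_le[of "real_of_int a" "real_of_int b"]
      by (simp add: emb_def w)
    moreover have "\<bar>real_of_int b\<bar> \<le> B" using nb norm_snd_le[of "real_of_int b" "real_of_int a"]
      by (simp add: emb_def w)
    ultimately show "w \<in> {-?N..?N} \<times> {-?N..?N}" unfolding w
      by (auto simp: abs_le_iff) (linarith+)
  qed
  then show ?thesis by (rule finite_subset) auto
qed

lemma box_supp:
  assumes "\<forall>u. mu u \<in> (if u \<in> S then {0..1/2::real} else {0})"
  shows "supp mu \<subseteq> S"
proof
  fix u assume "u \<in> supp mu"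
  then show "u \<in> S" using assms[rule_format, of u] by (auto simp: supp_def split: if_splits)
qed

lemma closed_X:
  assumes finS: "finite S" and C: "closed C"
  shows "closed ({mu::rseq. \<forall>u. mu u \<in> (if u \<in> S then {0..1/2} else {0})} \<inter> {mu. (\<Sum>u\<in>S. mu u) = 3.99}
           \<inter> {mu. Sigma1R mu \<subseteq> C})" (is "closed (?K0 \<inter> ?X)")
proof -
  have K0: "closed ?K0"
    by (intro closed_Int compact_imp_closed box_compact_gen closed_Collect_eq cont_sum1) auto
  have "open (- (?K0 \<inter> ?X))"
  proof (subst open_subopen, intro ballI)
    fix mu assume mu: "mu \<in> - (?K0 \<inter> ?X)"
    show "\<exists>T. open T \<and> mu \<in> T \<and> T \<subseteq> - (?K0 \<inter> ?X)"
    proof (cases "mu \<in> ?K0")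
      case False
      show ?thesis
      proof (intro exI[of _ "- ?K0"] conjI)
        show "open (- ?K0)" using K0 by (rule open_Compl)
      qed (use False in auto)
    next
      case True
      then have box: "\<forall>u. mu u \<in> (if u \<in> S then {0..1/2} else {0})" and tot: "(\<Sum>u\<in>S. mu u) = 3.99"
        by auto
      have suppS: "supp mu \<subseteq> S" using box by (rule box_supp)
      from True mu obtain p where p: "p \<in> Sigma1R mu" "p \<notin> C" by auto
      from p(1) obtain t where t: "p = (\<Sum>v\<in>S. t v *\<^sub>R emb v)" "\<forall>v\<in>S. 0 \<le> t v \<and> t v \<le> mu v"
        "(\<Sum>v\<in>S. t v) = 1" unfolding sigma_F[OF finS suppS] by auto
      define q where "q = (\<Sum>v\<in>S. (mu v / 3.99) *\<^sub>R emb v)"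
      have "open (-C)" using C by auto
      then obtain e where e: "e > 0" "ball p e \<subseteq> -C" using p(2) open_contains_ball by blast
      define d where "d = min (1/2) (e / (norm (q - p) + 1))"
      have "e / (norm (q - p) + 1) > 0" using e by (intro divide_pos_pos) (auto intro: add_nonneg_pos)
      then have d0: "d > 0" "d \<le> 1/2" unfolding d_def by (simp, linarith)
      define pd where "pd = (1 - d) *\<^sub>R p + d *\<^sub>R q"
      have "dist p pd = d * norm (q - p)"
        using d0 by (simp add: pd_def dist_norm algebra_simps norm_minus_commute flip: scaleR_diff_right)
      also have "\<dots> < e"
      proof -
        have "d * norm (q - p) \<le> e / (norm (q - p) + 1) * norm (q - p)"
          by (intro mult_right_mono) (auto simp: d_def)
        also have "\<dots> < e"
        proof -
          have "e * norm (q - p) < e * (norm (q - p) + 1)" using e by simp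
          moreover have "norm (q - p) + 1 > 0" by (simp add: add_nonneg_pos)
          ultimately show ?thesis by (simp add: pos_divide_less_eq mult.commute)
        qed
        finally show ?thesis .
      qed
      finally have pdC: "pd \<notin> C" using e by auto
      define td where "td = (\<lambda>v. (1 - d) * t v + d * (mu v / 3.99))"
      have pd: "pd = (\<Sum>v\<in>S. td v *\<^sub>R emb v)"
        by (simp add: pd_def td_def t(1) q_def scaleR_sum_right sum.distrib scaleR_add_left)
      have std: "(\<Sum>v\<in>S. td v) = 1"
      proof -
        have "(\<Sum>v\<in>S. td v) = (1 - d) * (\<Sum>v\<in>S. t v) + d * ((\<Sum>v\<in>S. mu v) / 3.99)"
          unfolding td_def sum.distrib sum_distrib_left[symmetric] sum_divide_distrib[symmetric] by (rule refl)
        then show ?thesis by (simp add: tot t(3))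
      qed
      define T where "T = {f::rseq. \<forall>i\<in>{u\<in>S. 0 < mu u}. f (id i) \<in> {td i<..}}"
      have "open T" unfolding T_def using finS by (intro product_topology_basis') auto
      moreover have "mu \<in> T"
      proof -
        have "td u < mu u" if "u \<in> S" "0 < mu u" for u
        proof -
          have "(1 - d) * t u \<le> (1 - d) * mu u" using t(2) that d0 by (intro mult_left_mono) auto
          moreover have "d * (mu u / 3.99) < d * mu u" using d0 that by (intro mult_strict_left_mono) auto
          ultimately show ?thesis by (simp add: td_def algebra_simps)
        qed
        then show ?thesis by (auto simp: T_def)
      qed
      moreover have "T \<subseteq> - (?K0 \<inter> ?X)"
      proof
        fix m assume m: "m \<in> T"
        show "m \<in> - (?K0 \<inter> ?X)"
        proof
          assume mk: "m \<in> ?K0 \<inter> ?X"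
          then have mbox: "\<forall>u. m u \<in> (if u \<in> S then {0..1/2} else {0})" by auto
          have msupp: "supp m \<subseteq> S" using mbox by (rule box_supp)
          have "\<forall>v\<in>S. 0 \<le> td v \<and> td v \<le> m v"
          proof
            fix v assume v: "v \<in> S"
            show "0 \<le> td v \<and> td v \<le> m v"
            proof (cases "0 < mu v")
              case True
              have "m (id v) \<in> {td v<..}" using m v True unfolding T_def by blast
              moreover have "0 \<le> td v" using t(2) v d0 True unfolding td_def
                by (intro add_nonneg_nonneg mult_nonneg_nonneg) auto
              ultimately show ?thesis by auto
            next
              case False
              then have "mu v = 0" using box v by (metis atLeastAtMost_iff order_antisym_conv not_less)
              then have "t v = 0" using t(2) v by force
              moreover have "0 \<le> m v" using mbox[rule_format, of v] v by auto
              ultimately show ?thesis using \<open>mu v = 0\<close> by (simp add: td_def)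
            qed
          qed
          then have "pd \<in> Sigma1R m" unfolding sigma_F[OF finS msupp] pd using std by blast
          then show False using mk pdC by auto
        qed
      qed
      ultimately show ?thesis by blast
    qed
  qed
  then show ?thesis by (simp add: closed_open)
qed


definition dvec :: "int\<times>int \<Rightarrow> int\<times>int \<Rightarrow> int\<times>int \<Rightarrow> int\<times>int \<Rightarrow> real \<Rightarrow> real \<Rightarrow> real \<Rightarrow> int\<times>int \<Rightarrow> real" where
  "dvec v1 v2 v3 v l1 l2 l3 u = (if u = v1 then l1 else 0) + (if u = v2 then l2 else 0)
     + (if u = v3 then l3 else 0) - (if u = v then 1 else 0)"

lemma delta_sum:
  fixes g :: "int\<times>int \<Rightarrow> 'b::real_vector"
  assumes "finite A"
  shows "(\<Sum>u\<in>A. (if u = a then c else 0) *\<^sub>R g u) = (if a \<in> A then c *\<^sub>R g a else 0)"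
proof -
  have "(\<Sum>u\<in>A. (if u = a then c else 0) *\<^sub>R g u) = (\<Sum>u\<in>A. if u = a then c *\<^sub>R g a else 0)"
    by (rule sum.cong) auto
  also have "\<dots> = (if a \<in> A then c *\<^sub>R g a else 0)" using assms by (simp add: sum.delta)
  finally show ?thesis .
qed

lemma dsumR:
  fixes g :: "int\<times>int \<Rightarrow> 'b::real_vector"
  assumes "finite A"
  shows "(\<Sum>u\<in>A. dvec v1 v2 v3 v l1 l2 l3 u *\<^sub>R g u) =
    (if v1 \<in> A then l1 *\<^sub>R g v1 else 0) + (if v2 \<in> A then l2 *\<^sub>R g v2 else 0)
    + (if v3 \<in> A then l3 *\<^sub>R g v3 else 0) - (if v \<in> A then g v else 0)"
proof -
  have "(\<Sum>u\<in>A. dvec v1 v2 v3 v l1 l2 l3 u *\<^sub>R g u) =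
     (\<Sum>u\<in>A. (if u = v1 then l1 else 0) *\<^sub>R g u) + (\<Sum>u\<in>A. (if u = v2 then l2 else 0) *\<^sub>R g u)
     + (\<Sum>u\<in>A. (if u = v3 then l3 else 0) *\<^sub>R g u) - (\<Sum>u\<in>A. (if u = v then 1 else 0) *\<^sub>R g u)"
    unfolding dvec_def scaleR_add_left scaleR_diff_left sum.distrib sum_subtractf by (rule refl)
  then show ?thesis by (simp only: delta_sum[OF assms]) simp
qed

lemma dsum:
  assumes "finite A"
  shows "(\<Sum>u\<in>A. dvec v1 v2 v3 v l1 l2 l3 u * g u) =
    (if v1 \<in> A then l1 * g v1 else 0) + (if v2 \<in> A then l2 * g v2 else 0)
    + (if v3 \<in> A then l3 * g v3 else 0) - (if v \<in> A then g v else 0)"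
  using dsumR[OF assms, of v1 v2 v3 v l1 l2 l3 g] by simp

lemma dsum1:
  assumes "finite A"
  shows "(\<Sum>u\<in>A. dvec v1 v2 v3 v l1 l2 l3 u) =
    (if v1 \<in> A then l1 else 0) + (if v2 \<in> A then l2 else 0)
    + (if v3 \<in> A then l3 else 0) - (if v \<in> A then 1 else 0)"
  using dsum[OF assms, of v1 v2 v3 v l1 l2 l3 "\<lambda>_. 1"] by simp

lemma sigma_move:
  assumes fin: "finite F" and inF: "v1 \<in> F" "v2 \<in> F" "v3 \<in> F" "v \<in> F"
    and dist: "distinct [v1, v2, v3, v]"
    and l: "0 \<le> l1" "0 \<le> l2" "0 \<le> l3" "l1 + l2 + l3 = 1"
    and bary: "l1 *\<^sub>R emb v1 + l2 *\<^sub>R emb v2 + l3 *\<^sub>R emb v3 = emb v"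
    and e: "0 \<le> e" and mu0: "\<forall>u. 0 \<le> mu u"
    and s1: "supp mu \<subseteq> F" and s2: "supp mu' \<subseteq> F"
    and mu': "mu' = (\<lambda>u. mu u - e * dvec v1 v2 v3 v l1 l2 l3 u)"
  shows "Sigma1R mu' \<subseteq> Sigma1R mu"
proof
  let ?d = "dvec v1 v2 v3 v l1 l2 l3"
  fix p assume "p \<in> Sigma1R mu'"
  then obtain t where t: "p = (\<Sum>u\<in>F. t u *\<^sub>R emb u)" "\<forall>u\<in>F. 0 \<le> t u \<and> t u \<le> mu' u"
    "(\<Sum>u\<in>F. t u) = 1" unfolding sigma_F[OF fin s2] by auto
  define r where "r = t v - min (t v) (mu v)"
  have "t v \<le> mu v + e" using t(2) inF(4) dist by (auto simp: mu' dvec_def)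
  then have r: "0 \<le> r" "r \<le> e" using e by (auto simp: r_def min_def)
  define t2 where "t2 = (\<lambda>u. t u + r * ?d u)"
  have "(\<Sum>u\<in>F. t2 u) = (\<Sum>u\<in>F. t u) + r * (\<Sum>u\<in>F. ?d u)"
    by (simp add: t2_def sum.distrib sum_distrib_left)
  also have "\<dots> = 1" using t(3) l(4) inF by (simp add: dsum1[OF fin])
  finally have st2: "(\<Sum>u\<in>F. t2 u) = 1" .
  have "(\<Sum>u\<in>F. t2 u *\<^sub>R emb u) = (\<Sum>u\<in>F. t u *\<^sub>R emb u) + r *\<^sub>R (\<Sum>u\<in>F. ?d u *\<^sub>R emb u)"
    by (simp add: t2_def sum.distrib scaleR_add_left scaleR_sum_right)
  also have "\<dots> = p" using t(1) bary inF by (simp add: dsumR[OF fin])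
  finally have pt2: "(\<Sum>u\<in>F. t2 u *\<^sub>R emb u) = p" .
  have "\<forall>u\<in>F. 0 \<le> t2 u \<and> t2 u \<le> mu u"
  proof
    fix u assume u: "u \<in> F"
    have tu: "0 \<le> t u" "t u \<le> mu' u" using t(2) u by auto
    consider "u = v" | "u = v1" | "u = v2" | "u = v3" | "u \<noteq> v" "u \<noteq> v1" "u \<noteq> v2" "u \<noteq> v3" by blast
    then show "0 \<le> t2 u \<and> t2 u \<le> mu u"
    proof cases
      case 1
      then show ?thesis using dist mu0[rule_format, of v] tu by (auto simp: t2_def dvec_def r_def)
    next
      case 2
      have "r * l1 \<le> e * l1" using r l by (intro mult_right_mono) auto
      then show ?thesis using 2 dist tu r l by (auto simp: t2_def dvec_def mu')
    next
      case 3
      have "r * l2 \<le> e * l2" using r l by (intro mult_right_mono) auto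
      then show ?thesis using 3 dist tu r l by (auto simp: t2_def dvec_def mu')
    next
      case 4
      have "r * l3 \<le> e * l3" using r l by (intro mult_right_mono) auto
      then show ?thesis using 4 dist tu r l by (auto simp: t2_def dvec_def mu')
    next
      case 5
      then show ?thesis using tu by (auto simp: t2_def dvec_def mu')
    qed
  qed
  then show "p \<in> Sigma1R mu" unfolding sigma_F[OF fin s1] using st2 pt2 by blast
qed

lemma aff3:
  fixes p x y z :: "real \<times> real"
  assumes "affine L" "p \<in> L" "x \<in> L" "y \<in> L" "p = a *\<^sub>R x + b *\<^sub>R y + c *\<^sub>R z"
    "a + b + c = 1" "c \<noteq> 0"
  shows "z \<in> L"
proof -
  have "z = (1/c) *\<^sub>R p + (-a/c) *\<^sub>R x + (-b/c) *\<^sub>R y"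
    using assms(5,7) by (simp add: scaleR_add_right divide_simps algebra_simps)
  moreover have "(1/c) + (-a/c) + (-b/c) = 1"
  proof -
    have "(1/c) + (-a/c) + (-b/c) = (1 - a - b)/c" by (simp add: diff_divide_distrib)
    also have "\<dots> = 1" using assms(6,7) by (simp add: eq_diff_eq[symmetric] add.assoc)
    finally show ?thesis .
  qed
  ultimately show ?thesis using mem_affine_3[OF assms(1,2,3,4)] by metis
qed


definition qf :: "int \<times> int \<Rightarrow> real" where
  "qf u = (real_of_int (fst u))^2 + (real_of_int (snd u))^2"

lemma strict_conv:
  assumes l: "0 \<le> l1" "0 \<le> l2" "0 \<le> l3" "l1 + l2 + l3 = 1"
    and bary: "l1 *\<^sub>R emb v1 + l2 *\<^sub>R emb v2 + l3 *\<^sub>R emb v3 = emb v"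
    and dist: "distinct [v1, v2, v3, v]"
  shows "l1 * qf v1 + l2 * qf v2 + l3 * qf v3 - qf v > 0"
proof -
  obtain x1 y1 where 1: "v1 = (x1, y1)" by (cases v1)
  obtain x2 y2 where 2: "v2 = (x2, y2)" by (cases v2)
  obtain x3 y3 where 3: "v3 = (x3, y3)" by (cases v3)
  obtain x y where 4: "v = (x, y)" by (cases v)
  let ?x1 = "real_of_int x1" and ?x2 = "real_of_int x2" and ?x3 = "real_of_int x3" and ?x = "real_of_int x"
  let ?y1 = "real_of_int y1" and ?y2 = "real_of_int y2" and ?y3 = "real_of_int y3" and ?y = "real_of_int y"
  have bx: "?x = l1 * ?x1 + l2 * ?x2 + l3 * ?x3" and "?y = l1 * ?y1 + l2 * ?y2 + l3 * ?y3"
    using arg_cong[OF bary, of fst] arg_cong[OF bary, of snd] by (simp_all add: emb_def 1 2 3 4)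
  then have id: "l1 * qf v1 + l2 * qf v2 + l3 * qf v3 - qf v =
     l1 * ((?x1 - ?x)^2 + (?y1 - ?y)^2) + l2 * ((?x2 - ?x)^2 + (?y2 - ?y)^2) + l3 * ((?x3 - ?x)^2 + (?y3 - ?y)^2)"
    using l(4) unfolding qf_def 1 2 3 4 fst_conv snd_conv by algebra
  have pos: "(real_of_int a - real_of_int b)^2 + (real_of_int c - real_of_int d)^2 > 0" if "(a, c) \<noteq> (b, d)" for a b c d :: int
  proof -
    have "a \<noteq> b \<or> c \<noteq> d" using that by auto
    then show ?thesis by (auto simp: add_pos_nonneg add_nonneg_pos)
  qed
  have p1: "(?x1 - ?x)^2 + (?y1 - ?y)^2 > 0" using dist by (intro pos) (auto simp: 1 4)
  have p2: "(?x2 - ?x)^2 + (?y2 - ?y)^2 > 0" using dist by (intro pos) (auto simp: 2 4)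
  have p3: "(?x3 - ?x)^2 + (?y3 - ?y)^2 > 0" using dist by (intro pos) (auto simp: 3 4)
  have "l1 > 0 \<or> l2 > 0 \<or> l3 > 0" using l by linarith
  then have "l1 * ((?x1 - ?x)^2 + (?y1 - ?y)^2) + l2 * ((?x2 - ?x)^2 + (?y2 - ?y)^2) + l3 * ((?x3 - ?x)^2 + (?y3 - ?y)^2) > 0"
    using p1 p2 p3 l
    by (smt (verit, best) mult_nonneg_nonneg mult_pos_pos)
  then show ?thesis using id by simp
qed


theorem lemma3p2:
  assumes "\<exists>A. counterexample A"
  shows "\<exists>A. counterexample A \<and>
    (\<forall>v1 v2 v3 v. distinct [v1, v2, v3, v] \<and>
        A v1 > 0 \<and> A v2 > 0 \<and> A v3 > 0 \<and>
        \<not> collinear {emb v1, emb v2, emb v3} \<and>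
        emb v \<in> convex hull {emb v1, emb v2, emb v3} \<longrightarrow>
      A v = 1/2 \<or>
      (\<exists>L. is_line L \<and> emb v \<in> L \<and> pts_in A L = 3/2 \<and>
         (\<forall>a\<in>{v1, v2, v3}. \<forall>b\<in>{v1, v2, v3}. a \<noteq> b \<and>
            emb v \<in> closed_segment (emb a) (emb b) \<longrightarrow>
            L \<noteq> affine hull {emb a, emb b})))"
proof -
  obtain A0 where A0: "counterexample A0" using assms by blast
  have A0r: "\<forall>v. 0 \<le> A0 v" "finite (supp A0)" "total A0 = 3.99" "\<forall>v. A0 v \<le> 1/2"
    "\<forall>L. is_line L \<longrightarrow> pts_in A0 L \<le> 3/2" "\<forall>w. emb w \<notin> interior (Sigma1R A0)"
    using A0 by (auto simp: counterexample_def real_seq_def)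
  define H where "H = convex hull (emb ` supp A0)"
  define S where "S = {w. emb w \<in> H}"
  have finS: "finite S" unfolding S_def H_def using A0r(2) by (intro finite_lattice_hull) auto
  have sA0: "supp A0 \<subseteq> S" unfolding S_def H_def using hull_subset by fastforce
  have clC: "closed (Sigma1R A0)" using A0 by (intro sigma_closed) (simp add: counterexample_def)
  define B where "B = {mu::rseq. \<forall>u. mu u \<in> (if u \<in> S then {0..1/2} else {0})}"
  define K where "K = (B \<inter> {mu. (\<Sum>u\<in>S. mu u) = 3.99} \<inter> {mu. Sigma1R mu \<subseteq> Sigma1R A0}) \<inter>
     (\<Inter>L\<in>{L. is_line L}. {mu. (\<Sum>u\<in>{u\<in>S. emb u \<in> L}. mu u) \<le> 3/2})"
  define Phi where "Phi = (\<lambda>mu::rseq. \<Sum>u\<in>S. mu u * qf u)"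
  have clK: "closed K" unfolding K_def B_def
    by (intro closed_Int closed_X[OF finS clC] closed_INT ballI closed_Collect_le cont_sum1 continuous_on_const)
  have cB: "compact B" unfolding B_def by (intro box_compact_gen) auto
  have KB: "K \<subseteq> B" unfolding K_def by auto
  have cK: "compact K" using compact_Int_closed[OF cB clK] KB by (simp add: Int_absorb1)
  have A0K: "A0 \<in> K"
  proof -
    have "A0 \<in> B" unfolding B_def
    proof (intro CollectI allI)
      fix u show "A0 u \<in> (if u \<in> S then {0..1/2} else {0})"
        using A0r(1)[rule_format, of u] A0r(4)[rule_format, of u] sA0 supp_zero[of u A0] by auto
    qed
    moreover have "(\<Sum>u\<in>S. A0 u) = 3.99" using A0r(3) total_F[OF finS sA0] by simp
    moreover have "(\<Sum>u\<in>{u\<in>S. emb u \<in> L}. A0 u) \<le> 3/2" if "is_line L" for L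
      using A0r(5)[rule_format, OF that] pts_F[OF finS sA0, of L] by (simp only:)
    ultimately show ?thesis unfolding K_def by auto
  qed
  obtain mu where muK: "mu \<in> K" and mumin: "\<forall>y\<in>K. Phi mu \<le> Phi y"
    using continuous_attains_inf[OF cK _ cont_sum[where A=K and F=S and c=qf]] A0K unfolding Phi_def by blast
  have mubox: "\<forall>u. mu u \<in> (if u \<in> S then {0..1/2} else {0})" using muK KB unfolding B_def by blast
  have smu: "supp mu \<subseteq> S" using mubox by (rule box_supp)
  have mu01: "0 \<le> mu u \<and> mu u \<le> 1/2" for u
  proof -
    have "mu u \<in> (if u \<in> S then {0..1/2} else {0})" using mubox by blast
    then show ?thesis by (auto split: if_splits)
  qed
  have mu0: "\<forall>u. 0 \<le> mu u" and muhalf: "\<forall>u. mu u \<le> 1/2" using mu01 by auto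
  have mutot: "(\<Sum>u\<in>S. mu u) = 3.99" and musig: "Sigma1R mu \<subseteq> Sigma1R A0"
    and mulines: "\<And>L. is_line L \<Longrightarrow> (\<Sum>u\<in>{u\<in>S. emb u \<in> L}. mu u) \<le> 3/2"
    using muK unfolding K_def by auto
  have "counterexample mu"
    unfolding counterexample_def real_seq_def
  proof (intro conjI allI impI)
    show "finite (supp mu)" using smu finS by (rule finite_subset)
    show "total mu = 3.99" using total_F[OF finS smu] mutot by simp
    fix L assume "is_line L" then show "pts_in mu L \<le> 3/2" using pts_F[OF finS smu, of L] mulines by (simp only:)
  next
    fix w show "emb w \<notin> interior (Sigma1R mu)" using interior_mono[OF musig] A0r(6) by blast
  qed (use mu0 muhalf in auto)
  moreover have "\<forall>v1 v2 v3 v. distinct [v1, v2, v3, v] \<and>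
        mu v1 > 0 \<and> mu v2 > 0 \<and> mu v3 > 0 \<and>
        \<not> collinear {emb v1, emb v2, emb v3} \<and>
        emb v \<in> convex hull {emb v1, emb v2, emb v3} \<longrightarrow>
      mu v = 1/2 \<or>
      (\<exists>L. is_line L \<and> emb v \<in> L \<and> pts_in mu L = 3/2 \<and>
         (\<forall>a\<in>{v1, v2, v3}. \<forall>b\<in>{v1, v2, v3}. a \<noteq> b \<and>
            emb v \<in> closed_segment (emb a) (emb b) \<longrightarrow>
            L \<noteq> affine hull {emb a, emb b}))"
  proof (intro allI impI)
    fix v1 v2 v3 v
    assume Hy: "distinct [v1, v2, v3, v] \<and>
        mu v1 > 0 \<and> mu v2 > 0 \<and> mu v3 > 0 \<and>
        \<not> collinear {emb v1, emb v2, emb v3} \<and>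
        emb v \<in> convex hull {emb v1, emb v2, emb v3}"
    then have dist: "distinct [v1, v2, v3, v]" and pos: "mu v1 > 0" "mu v2 > 0" "mu v3 > 0"
      and inh: "emb v \<in> convex hull {emb v1, emb v2, emb v3}" by auto
    show "mu v = 1/2 \<or>
      (\<exists>L. is_line L \<and> emb v \<in> L \<and> pts_in mu L = 3/2 \<and>
         (\<forall>a\<in>{v1, v2, v3}. \<forall>b\<in>{v1, v2, v3}. a \<noteq> b \<and>
            emb v \<in> closed_segment (emb a) (emb b) \<longrightarrow>
            L \<noteq> affine hull {emb a, emb b}))"
    proof (rule ccontr)
      assume N: "\<not> ?thesis"
      then have nv: "mu v \<noteq> 1/2" by blast
      have NL: "\<exists>a\<in>{v1, v2, v3}. \<exists>b\<in>{v1, v2, v3}. a \<noteq> b \<and> L = affine hull {emb a, emb b}"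
        if "is_line L" "emb v \<in> L" "pts_in mu L = 3/2" for L
        using N that by blast
      obtain l1 l2 l3 where l: "0 \<le> l1" "0 \<le> l2" "0 \<le> l3" "l1 + l2 + l3 = 1"
        and bary0: "emb v = l1 *\<^sub>R emb v1 + l2 *\<^sub>R emb v2 + l3 *\<^sub>R emb v3"
        using inh unfolding convex_hull_3 by blast
      have bary: "l1 *\<^sub>R emb v1 + l2 *\<^sub>R emb v2 + l3 *\<^sub>R emb v3 = emb v" using bary0 by simp
      have inS: "v1 \<in> S" "v2 \<in> S" "v3 \<in> S" using pos smu by (auto simp: supp_def)
      have "convex hull {emb v1, emb v2, emb v3} \<subseteq> H"
        unfolding H_def by (intro hull_minimal) (use inS in \<open>auto simp: S_def H_def\<close>)
      then have vS: "v \<in> S" using inh by (auto simp: S_def)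
      define G where "G = (\<lambda>T. 3/2 - sum mu T) ` {T. T \<subseteq> S \<and> sum mu T < 3/2}"
      define E where "E = {1/2 - mu v, mu v1, mu v2, mu v3} \<union> G"
      have "finite {T. T \<subseteq> S \<and> sum mu T < 3/2}" by (rule finite_subset[of _ "Pow S"]) (auto simp: finS)
      then have "finite G" unfolding G_def by (rule finite_imageI)
      then have finE: "finite E" unfolding E_def by simp
      have Epos: "\<forall>x\<in>E. 0 < x" using pos nv muhalf[rule_format, of v] by (auto simp: E_def G_def)
      define e where "e = Min E"
      have "E \<noteq> {}" unfolding E_def by simp
      then have "e \<in> E" unfolding e_def using finE by (rule Min_in[rotated])
      then have e0: "e > 0" using Epos by blast
      have eE: "\<And>x. x \<in> E \<Longrightarrow> e \<le> x" using finE by (simp add: e_def)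
      have e1: "e \<le> 1/2 - mu v" "e \<le> mu v1" "e \<le> mu v2" "e \<le> mu v3" by (auto intro: eE simp: E_def)
      let ?d = "dvec v1 v2 v3 v l1 l2 l3"
      define mu' where "mu' = (\<lambda>u. mu u - e * ?d u)"
      have l1le: "l1 \<le> 1" "l2 \<le> 1" "l3 \<le> 1" using l by auto
      have mu'box: "\<forall>u. mu' u \<in> (if u \<in> S then {0..1/2} else {0})"
      proof
        fix u
        consider "u = v" | "u = v1" | "u = v2" | "u = v3" | "u \<noteq> v" "u \<noteq> v1" "u \<noteq> v2" "u \<noteq> v3" by blast
        then show "mu' u \<in> (if u \<in> S then {0..1/2} else {0})"
        proof cases
          case 1 then show ?thesis using dist vS e1 e0 mu01[of v] by (auto simp: mu'_def dvec_def)
        next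
          case 2
          have "e * l1 \<le> e" using e0 l1le by (simp add: mult_left_le)
          moreover have "0 \<le> e * l1" using e0 l by simp
          ultimately show ?thesis using 2 dist inS e1 mu01[of v1] by (auto simp: mu'_def dvec_def)
        next
          case 3
          have "e * l2 \<le> e" using e0 l1le by (simp add: mult_left_le)
          moreover have "0 \<le> e * l2" using e0 l by simp
          ultimately show ?thesis using 3 dist inS e1 mu01[of v2] by (auto simp: mu'_def dvec_def)
        next
          case 4
          have "e * l3 \<le> e" using e0 l1le by (simp add: mult_left_le)
          moreover have "0 \<le> e * l3" using e0 l by simp
          ultimately show ?thesis using 4 dist inS e1 mu01[of v3] by (auto simp: mu'_def dvec_def)
        next
          case 5 then show ?thesis using mubox[rule_format, of u] by (auto simp: mu'_def dvec_def)
        qed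
      qed
      have smu': "supp mu' \<subseteq> S" using mu'box by (rule box_supp)
      have "(\<Sum>u\<in>S. mu' u) = (\<Sum>u\<in>S. mu u) - e * (\<Sum>u\<in>S. ?d u)"
        by (simp add: mu'_def sum_subtractf sum_distrib_left)
      also have "\<dots> = 3.99" using mutot inS vS l(4) by (simp add: dsum1[OF finS])
      finally have mu'tot: "(\<Sum>u\<in>S. mu' u) = 3.99" .
      have "Sigma1R mu' \<subseteq> Sigma1R mu"
        by (rule sigma_move[OF finS inS vS dist l bary _ mu0 smu smu']) (use e0 in \<open>auto simp: mu'_def\<close>)
      then have mu'sig: "Sigma1R mu' \<subseteq> Sigma1R A0" using musig by auto
      have mu'lines: "(\<Sum>u\<in>{u\<in>S. emb u \<in> L}. mu' u) \<le> 3/2" if L: "is_line L" for L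
      proof -
        let ?SL = "{u\<in>S. emb u \<in> L}"
        have finSL: "finite ?SL" using finS by auto
        have eq: "(\<Sum>u\<in>?SL. mu' u) = (\<Sum>u\<in>?SL. mu u) - e * (\<Sum>u\<in>?SL. ?d u)"
          by (simp add: mu'_def sum_subtractf sum_distrib_left)
        have dL: "(\<Sum>u\<in>?SL. ?d u) = (if emb v1 \<in> L then l1 else 0) + (if emb v2 \<in> L then l2 else 0)
           + (if emb v3 \<in> L then l3 else 0) - (if emb v \<in> L then 1 else 0)"
          using inS vS by (simp add: dsum1[OF finSL])
        have old: "(\<Sum>u\<in>?SL. mu u) \<le> 3/2" using mulines[OF L] .
        show ?thesis
        proof (cases "emb v \<in> L")
          case False
          then have "(\<Sum>u\<in>?SL. ?d u) \<ge> 0" using dL l by simp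
          then show ?thesis using eq old e0 by (smt (verit) mult_nonneg_nonneg)
        next
          case True
          show ?thesis
          proof (cases "(\<Sum>u\<in>?SL. mu u) < 3/2")
            case True
            have "?SL \<subseteq> S" by auto
            then have "?SL \<in> {T. T \<subseteq> S \<and> sum mu T < 3/2}" using True by simp
            then have "3/2 - (\<Sum>u\<in>?SL. mu u) \<in> G" unfolding G_def by (rule imageI)
            then have "3/2 - (\<Sum>u\<in>?SL. mu u) \<in> E" unfolding E_def by simp
            then have "e \<le> 3/2 - (\<Sum>u\<in>?SL. mu u)" by (rule eE)
            moreover have "(\<Sum>u\<in>?SL. ?d u) \<ge> -1" using dL l by simp
            moreover have "e * (\<Sum>u\<in>?SL. ?d u) \<ge> e * (-1)"
              using calculation(2) e0 by (intro mult_left_mono) auto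
            ultimately show ?thesis using eq e0 by linarith
          next
            case False
            have "pts_in mu L = (\<Sum>u\<in>?SL. mu u)" by (rule pts_F[OF finS smu])
            then have "pts_in mu L = 3/2" using old False by linarith
            from NL[OF L True this] obtain a b where ab: "a \<in> {v1, v2, v3}" "b \<in> {v1, v2, v3}" "a \<noteq> b"
              "L = affine hull {emb a, emb b}" by blast
            have affL: "affine L" unfolding ab(4) by (rule affine_affine_hull)
            have abL: "emb a \<in> L" "emb b \<in> L" unfolding ab(4) by (simp_all add: hull_inc)
            have cases3: "(emb v1 \<in> L \<and> emb v2 \<in> L) \<or> (emb v1 \<in> L \<and> emb v3 \<in> L) \<or> (emb v2 \<in> L \<and> emb v3 \<in> L)"
              using ab(1,2,3) abL by auto
            have c3: "l3 = 0" if "emb v1 \<in> L" "emb v2 \<in> L" "emb v3 \<notin> L"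
            proof (rule ccontr)
              assume "l3 \<noteq> 0"
              then have "emb v3 \<in> L" by (rule aff3[OF affL True that(1,2) bary0 l(4)])
              then show False using that(3) by simp
            qed
            have c2: "l2 = 0" if "emb v1 \<in> L" "emb v3 \<in> L" "emb v2 \<notin> L"
            proof (rule ccontr)
              assume "l2 \<noteq> 0"
              have "emb v = l1 *\<^sub>R emb v1 + l3 *\<^sub>R emb v3 + l2 *\<^sub>R emb v2" using bary0 by (simp only: ac_simps)
              moreover have "l1 + l3 + l2 = 1" using l(4) by linarith
              ultimately have "emb v2 \<in> L" using \<open>l2 \<noteq> 0\<close> by (rule aff3[OF affL True that(1,2)])
              then show False using that(3) by simp
            qed
            have c1: "l1 = 0" if "emb v2 \<in> L" "emb v3 \<in> L" "emb v1 \<notin> L"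
            proof (rule ccontr)
              assume "l1 \<noteq> 0"
              have "emb v = l2 *\<^sub>R emb v2 + l3 *\<^sub>R emb v3 + l1 *\<^sub>R emb v1" using bary0 by (simp only: ac_simps)
              moreover have "l2 + l3 + l1 = 1" using l(4) by linarith
              ultimately have "emb v1 \<in> L" using \<open>l1 \<noteq> 0\<close> by (rule aff3[OF affL True that(1,2)])
              then show False using that(3) by simp
            qed
            have "(if emb v1 \<in> L then l1 else 0) + (if emb v2 \<in> L then l2 else 0)
               + (if emb v3 \<in> L then l3 else 0) \<ge> 1"
              using cases3
            proof (elim disjE conjE)
              assume "emb v1 \<in> L" "emb v2 \<in> L" then show ?thesis using c3 l(4) by (cases "emb v3 \<in> L") auto
            next
              assume "emb v1 \<in> L" "emb v3 \<in> L" then show ?thesis using c2 l(4) by (cases "emb v2 \<in> L") auto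
            next
              assume "emb v2 \<in> L" "emb v3 \<in> L" then show ?thesis using c1 l(4) by (cases "emb v1 \<in> L") auto
            qed
            then have "(\<Sum>u\<in>?SL. ?d u) \<ge> 0" using dL True by simp
            then show ?thesis using eq old e0 by (smt (verit) mult_nonneg_nonneg)
          qed
        qed
      qed
      have "mu' \<in> B" unfolding B_def using mu'box by blast
      then have "mu' \<in> K" unfolding K_def using mu'tot mu'sig mu'lines by blast
      moreover have "Phi mu' < Phi mu"
      proof -
        have "Phi mu' = Phi mu - e * (\<Sum>u\<in>S. ?d u * qf u)"
        proof -
          have "Phi mu' = (\<Sum>u\<in>S. mu u * qf u - e * (?d u * qf u))"
            unfolding Phi_def mu'_def by (intro sum.cong refl) (simp add: left_diff_distrib)
          also have "\<dots> = Phi mu - e * (\<Sum>u\<in>S. ?d u * qf u)"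
            unfolding Phi_def sum_subtractf sum_distrib_left by (rule refl)
          finally show ?thesis .
        qed
        also have "(\<Sum>u\<in>S. ?d u * qf u) = l1 * qf v1 + l2 * qf v2 + l3 * qf v3 - qf v"
          using inS vS by (simp add: dsum[OF finS])
        finally show ?thesis using strict_conv[OF l bary dist] e0 by simp
      qed
      ultimately show False using mumin by (meson not_le)
    qed
  qed
  ultimately show ?thesis by blast
qed

end
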